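(* Let $\mathbb{F}_2=\pi_1(\mathbb{C}\setminus\{-1,1\},0)$ be the free group on generators $a_1,a_2$. For $Y>0$ let $N^{\mathcal{L}_-}_{\mathcal{PB}_3}(Y)$ be the number of reduced words $w\in\mathbb{F}_2$, $w\neq \mathrm{Id}$, with $\mathcal{L}_-(w)\le Y$. Then for every $Y>0$, $$N^{\mathcal{L}_-}_{\mathcal{PB}_3}(Y)\le \tfrac12 e^{3Y}.$$
   Context: Write a reduced word $w\in\mathbb{F}_2$ as $w=a_{j_1}^{k_1}a_{j_2}^{k_2}\cdots$ with consecutive $j_i$ different and $k_i\neq0$; the factors $a_{j_i}^{k_i}$ are the terms of $w$. The syllables of $w$ are: each term with $|k_i|\ge2$ (syllable of first type), and each maximal sequence of consecutive terms with $|k_i|=1$ all having the same sign of exponent (syllable of second type). This gives a unique decomposition of $w$ into syllables. The degree of a syllable is the sum of the absolute values of the exponents of its terms. For $w\ne\mathrm{Id}$, $\mathcal{L}_-(w)=\sum_k\log(3d_k)$, where the sum runs over the degrees $d_k$ of all syllables of $w$. *)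

theory Defs
  imports Complex_Main
begin

text \<open>A reduced word in the free group on a_1, a_2 is represented by its list of terms
  (j, k), standing for a_j^k, with j in {1,2}, k nonzero and consecutive j different.\<close>

type_synonym fword = "(nat \<times> int) list"

definition reduced_word :: "fword \<Rightarrow> bool" where
  "reduced_word ts \<longleftrightarrow>
     (\<forall>t\<in>set ts. fst t \<in> {1, 2} \<and> snd t \<noteq> 0) \<and>
     successively (\<lambda>x y. fst x \<noteq> fst y) ts"

text \<open>A term with exponent of absolute value at least 2
  is a syllable of first type (degree = absolute value of exponent); a maximal run of
  consecutive terms with exponents all equal to +1 (or all equal to -1) is a syllable of
  second type (degree = length of the run).\<close>

function syllable_degrees :: "fword \<Rightarrow> nat list" where
  "syllable_degrees [] = []"
| "syllable_degrees ((j, k) # ts) =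
     (if \<bar>k\<bar> \<ge> 2 then nat \<bar>k\<bar> # syllable_degrees ts
      else (let r = length (takeWhile (\<lambda>t. snd t = k) ts)
            in (r + 1) # syllable_degrees (drop r ts)))"
  by pat_completeness auto
termination
  by (relation "measure length") (auto simp: Let_def)

definition L_minus :: "fword \<Rightarrow> real" where
  "L_minus ts = (\<Sum>d\<leftarrow>syllable_degrees ts. ln (3 * real d))"

definition N_Lminus_PB3 :: "real \<Rightarrow> nat" where
  "N_Lminus_PB3 Y = card {ts. reduced_word ts \<and> ts \<noteq> [] \<and> L_minus ts \<le> Y}"

end

theory Submission
  imports Defs
begin

lemma sd_pos: "d \<in> set (syllable_degrees ts) \<Longrightarrow> d > 0"
  by (induction ts rule: syllable_degrees.induct) (auto simp: Let_def split: if_splits)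

definition PP :: "fword \<Rightarrow> real" where
  "PP ts = prod_list (map (\<lambda>d. 3 * real d) (syllable_degrees ts))"

lemma exp_sum_ln: "(\<forall>d\<in>set ds. d > 0) \<Longrightarrow>
   exp (\<Sum>d\<leftarrow>ds. ln (3 * real d)) = prod_list (map (\<lambda>d. 3 * real d) ds)"
  by (induction ds) (auto simp: exp_add)

lemma PP_exp: "PP ts = exp (L_minus ts)"
  unfolding PP_def L_minus_def using sd_pos by (simp add: exp_sum_ln)

lemma PP_pos: "PP ts > 0" by (simp add: PP_exp)

lemma PP_Nil: "PP [] = 1" by (simp add: PP_def)

fun fsl :: "fword \<Rightarrow> nat" where
  "fsl [] = 0"
| "fsl ((j,k)#xs) = (if 2 \<le> \<bar>k\<bar> then 1 else length (takeWhile (\<lambda>t. snd t = k) xs) + 1)"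

fun fdeg :: "fword \<Rightarrow> nat" where
  "fdeg [] = 0"
| "fdeg ((j,k)#xs) = (if 2 \<le> \<bar>k\<bar> then nat \<bar>k\<bar> else length (takeWhile (\<lambda>t. snd t = k) xs) + 1)"

definition rest :: "fword \<Rightarrow> fword" where "rest ts = drop (fsl ts) ts"

definition key :: "fword \<Rightarrow> nat \<times> int \<times> bool \<times> nat" where
  "key ts = (fst (hd ts), sgn (snd (hd ts)), 2 \<le> \<bar>snd (hd ts)\<bar>, fdeg ts)"

lemma sd_cons: "ts \<noteq> [] \<Longrightarrow> syllable_degrees ts = fdeg ts # syllable_degrees (rest ts)"
  by (cases ts) (auto simp: rest_def Let_def)

lemma PP_cons: "ts \<noteq> [] \<Longrightarrow> PP ts = 3 * real (fdeg ts) * PP (rest ts)"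
  unfolding PP_def by (subst sd_cons) auto

lemma fsl_pos: "ts \<noteq> [] \<Longrightarrow> fsl ts \<ge> 1"
  by (cases ts) auto

lemma fdeg_pos: "ts \<noteq> [] \<Longrightarrow> fdeg ts \<ge> 1"
  by (cases ts) auto

lemma rest_len: "ts \<noteq> [] \<Longrightarrow> length (rest ts) < length ts"
  using fsl_pos[of ts] by (auto simp: rest_def)

lemma reduced_drop: "reduced_word ts \<Longrightarrow> reduced_word (drop n ts)"
proof -
  assume a: "reduced_word ts"
  have "successively (\<lambda>x y. fst x \<noteq> fst y) (take n ts @ drop n ts)"
    using a by (simp add: reduced_word_def)
  then have "successively (\<lambda>x y. fst x \<noteq> fst y) (drop n ts)"
    by (simp only: successively_append_iff)
  then show ?thesis using a by (auto simp: reduced_word_def dest: in_set_dropD)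
qed

lemma alt_unique:
  "successively (\<lambda>x y. fst x \<noteq> fst y) (x#xs) \<Longrightarrow> successively (\<lambda>x y. fst x \<noteq> fst y) (x#ys)
   \<Longrightarrow> length xs = length ys
   \<Longrightarrow> \<forall>t\<in>set (x#xs). fst t \<in> {1::nat,2} \<and> snd t = (c::int)
   \<Longrightarrow> \<forall>t\<in>set (x#ys). fst t \<in> {1::nat,2} \<and> snd t = c \<Longrightarrow> xs = ys"
proof (induction xs arbitrary: x ys)
  case Nil
  then show ?case by simp
next
  case (Cons a xs)
  then obtain b ys' where ys: "ys = b # ys'" by (cases ys) auto
  have "fst a = fst b" using Cons.prems ys by auto
  moreover have "snd a = snd b" using Cons.prems ys by auto
  ultimately have ab: "a = b" by (simp add: prod_eq_iff)
  have "xs = ys'"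
    using Cons.IH[of a ys'] Cons.prems ys ab by auto
  then show ?case using ys ab by simp
qed


lemma key_inj:
  assumes r1: "reduced_word ts1" and r2: "reduced_word ts2" and n1: "ts1 \<noteq> []" and n2: "ts2 \<noteq> []"
    and k: "key ts1 = key ts2" and r: "rest ts1 = rest ts2"
  shows "ts1 = ts2"
proof -
  obtain j1 k1 xs1 where t1: "ts1 = (j1,k1)#xs1" using n1 by (cases ts1) auto
  obtain j2 k2 xs2 where t2: "ts2 = (j2,k2)#xs2" using n2 by (cases ts2) auto
  have j: "j1 = j2" and s: "sgn k1 = sgn k2" and b: "(2 \<le> \<bar>k1\<bar>) = (2 \<le> \<bar>k2\<bar>)"
    and d: "fdeg ts1 = fdeg ts2"
    using k t1 t2 by (auto simp: key_def)
  have k1nz: "k1 \<noteq> 0" using r1 t1 by (auto simp: reduced_word_def)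
  have k2nz: "k2 \<noteq> 0" using r2 t2 by (auto simp: reduced_word_def)
  show ?thesis
  proof (cases "2 \<le> \<bar>k1\<bar>")
    case True
    then have "nat \<bar>k1\<bar> = nat \<bar>k2\<bar>" using d b t1 t2 by auto
    then have "\<bar>k1\<bar> = \<bar>k2\<bar>" using True b by auto
    then have "k1 = k2" using s by (metis sgn_mult_abs)
    moreover have "xs1 = xs2" using r True b t1 t2 by (auto simp: rest_def)
    ultimately show ?thesis using t1 t2 j by simp
  next
    case False
    then have "\<bar>k1\<bar> = 1" "\<bar>k2\<bar> = 1" using k1nz k2nz b by auto
    then have kk: "k1 = k2" using s by (metis sgn_mult_abs mult.right_neutral)
    define P where "P = (\<lambda>t::nat\<times>int. snd t = k1)"
    have len: "length (takeWhile P xs1) = length (takeWhile P xs2)"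
      using d False b t1 t2 kk by (auto simp: P_def)
    have dr: "dropWhile P xs1 = dropWhile P xs2"
      using r False b t1 t2 kk by (auto simp: rest_def P_def dropWhile_eq_drop)
    have sq1: "successively (\<lambda>x y. fst x \<noteq> fst y) (((j1,k1) # takeWhile P xs1) @ dropWhile P xs1)"
      using r1 t1 by (simp add: reduced_word_def)
    have sq2: "successively (\<lambda>x y. fst x \<noteq> fst y) (((j1,k1) # takeWhile P xs2) @ dropWhile P xs2)"
      using r2 t2 j kk by (simp add: reduced_word_def)
    have "takeWhile P xs1 = takeWhile P xs2"
    proof (rule alt_unique[where x="(j1,k1)" and c=k1])
      show "successively (\<lambda>x y. fst x \<noteq> fst y) ((j1,k1) # takeWhile P xs1)"
        using sq1 by (simp only: successively_append_iff)
      show "successively (\<lambda>x y. fst x \<noteq> fst y) ((j1,k1) # takeWhile P xs2)"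
        using sq2 by (simp only: successively_append_iff)
      show "length (takeWhile P xs1) = length (takeWhile P xs2)" by (rule len)
      show "\<forall>t\<in>set ((j1,k1) # takeWhile P xs1). fst t \<in> {1,2} \<and> snd t = k1"
        using r1 t1 by (auto simp: reduced_word_def P_def dest: set_takeWhileD)
      show "\<forall>t\<in>set ((j1,k1) # takeWhile P xs2). fst t \<in> {1,2} \<and> snd t = k1"
        using r2 t2 j kk by (auto simp: reduced_word_def P_def dest: set_takeWhileD)
    qed
    then have "xs1 = xs2" using dr by (metis takeWhile_dropWhile_id)
    then show ?thesis using t1 t2 j kk by simp
  qed
qed


lemma zeta3: "M \<ge> 1 \<Longrightarrow> (\<Sum>d=1..M. 1 / real d ^ 3) \<le> 3/2 - 1 / (2 * real M)"
proof (induction M rule: nat_induct_at_least)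
  case base
  then show ?case by simp
next
  case (Suc M)
  have "(\<Sum>d=1..Suc M. 1 / real d ^ 3) = (\<Sum>d=1..M. 1 / real d ^ 3) + 1 / (real M + 1) ^ 3"
    by (simp add: add.commute)
  also have "\<dots> \<le> 3/2 - 1 / (2 * real M) + 1 / (real M + 1) ^ 3" using Suc by (simp add: add.commute)
  also have "\<dots> \<le> 3/2 - 1 / (2 * (real M + 1))"
  proof -
    have m: "real M \<ge> 1" using Suc by simp
    have "1 / (real M + 1) ^ 3 \<le> 1 / (2 * real M * (real M + 1))"
    proof (rule divide_left_mono)
      show "2 * real M * (real M + 1) \<le> (real M + 1) ^ 3"
        using m by (simp add: power3_eq_cube algebra_simps)
    qed (use m in auto)
    also have "\<dots> = 1 / (2 * real M) - 1 / (2 * (real M + 1))"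
      using m by (simp add: field_simps)
    finally show ?thesis by simp
  qed
  finally show ?case by (simp add: add.commute)
qed

definition w :: "nat \<times> int \<times> bool \<times> nat \<Rightarrow> real" where
  "w \<kappa> = 1 / (27 * real (snd (snd (snd \<kappa>))) ^ 3)"

definition TT :: "nat \<Rightarrow> (nat \<times> int \<times> bool \<times> nat) set" where
  "TT M = ({1,2} \<times> {-1,1} \<times> {True} \<times> {2..M}) \<union> ({1,2} \<times> {-1,1} \<times> {False} \<times> {1..M})"

lemma finite_TT: "finite (TT M)" by (simp add: TT_def)

lemma sum_TT: assumes "M \<ge> 1" shows "sum w (TT M) \<le> 8/27"
proof -
  let ?A = "{1::nat,2} \<times> {-1::int,1} \<times> {True} \<times> {2..M}"
  let ?B = "{1::nat,2} \<times> {-1::int,1} \<times> {False} \<times> {1..M}"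
  let ?S = "\<Sum>d=1..M. 1 / real d ^ 3"
  have z: "?S \<le> 3/2" using zeta3[OF assms] by (smt (verit) assms divide_nonneg_nonneg of_nat_0_le_iff)
  have S1: "?S = 1 + (\<Sum>d=2..M. 1 / real d ^ 3)"
    using assms by (simp add: sum.atLeast_Suc_atMost numeral_2_eq_2)
  have sA: "sum w ?A = 4 * (\<Sum>d=2..M. 1 / real d ^ 3) / 27"
  proof -
    have "sum w ?A = (\<Sum>a\<in>{1::nat,2}. \<Sum>b\<in>{-1::int,1}. \<Sum>c\<in>{True}. \<Sum>d\<in>{2..M}. w (a,b,c,d))"
      by (simp add: sum.cartesian_product)
    also have "\<dots> = 4 * (\<Sum>d=2..M. 1 / (27 * real d ^ 3))"
      by (simp add: w_def)
    also have "(\<Sum>d=2..M. 1 / (27 * real d ^ 3)) = (\<Sum>d=2..M. 1 / real d ^ 3) / 27"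
      by (simp add: sum_divide_distrib mult.commute)
    also have "4 * ((\<Sum>d=2..M. 1 / real d ^ 3) / 27) = 4 * (\<Sum>d=2..M. 1 / real d ^ 3) / 27" by simp
    finally show ?thesis .
  qed
  have sB: "sum w ?B = 4 * ?S / 27"
  proof -
    have "sum w ?B = (\<Sum>a\<in>{1::nat,2}. \<Sum>b\<in>{-1::int,1}. \<Sum>c\<in>{False}. \<Sum>d\<in>{1..M}. w (a,b,c,d))"
      by (simp add: sum.cartesian_product)
    also have "\<dots> = 4 * (\<Sum>d=1..M. 1 / (27 * real d ^ 3))"
      by (simp add: w_def)
    also have "(\<Sum>d=1..M. 1 / (27 * real d ^ 3)) = (\<Sum>d=1..M. 1 / real d ^ 3) / 27"
      by (simp add: sum_divide_distrib mult.commute)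
    also have "4 * ((\<Sum>d=1..M. 1 / real d ^ 3) / 27) = 4 * ?S / 27" by simp
    finally show ?thesis .
  qed
  have "sum w (TT M) = sum w ?A + sum w ?B"
    unfolding TT_def by (rule sum.union_disjoint) auto
  also have "\<dots> \<le> 8/27" using sA sB S1 z by simp
  finally show ?thesis .
qed


lemma key_in_TT:
  assumes "reduced_word ts" "ts \<noteq> []" "fdeg ts \<le> M"
  shows "key ts \<in> TT M"
proof -
  obtain j k xs where t: "ts = (j,k)#xs" using assms(2) by (cases ts) auto
  have "j \<in> {1,2}" "k \<noteq> 0" using assms(1) t by (auto simp: reduced_word_def)
  moreover have "sgn k \<in> {-1,1}" using \<open>k \<noteq> 0\<close> by (auto simp: sgn_if)
  moreover have "1 \<le> fdeg ts" using fdeg_pos assms(2) by blast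
  moreover have "2 \<le> \<bar>k\<bar> \<Longrightarrow> 2 \<le> fdeg ts" using t by auto
  ultimately show ?thesis using assms(3) t by (auto simp: key_def TT_def)
qed

lemma main:
  "\<forall>F. finite F \<and> (\<forall>ts\<in>F. reduced_word ts \<and> ts \<noteq> [] \<and> length ts \<le> n)
     \<longrightarrow> (\<Sum>ts\<in>F. 1 / PP ts ^ 3) \<le> 8/19"
proof (induction n)
  case 0
  show ?case
  proof (intro allI impI)
    fix F :: "fword set"
    assume "finite F \<and> (\<forall>ts\<in>F. reduced_word ts \<and> ts \<noteq> [] \<and> length ts \<le> 0)"
    then have "F = {}" by auto
    then show "(\<Sum>ts\<in>F. 1 / PP ts ^ 3) \<le> 8/19" by simp
  qed
next
  case (Suc n)
  show ?case
  proof (intro allI impI)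
    fix F :: "fword set"
    assume A: "finite F \<and> (\<forall>ts\<in>F. reduced_word ts \<and> ts \<noteq> [] \<and> length ts \<le> Suc n)"
    then have fin: "finite F" by blast
    define M where "M = max 1 (Max (fdeg ` F))"
    have M1: "M \<ge> 1" by (simp add: M_def)
    have kT: "key ` F \<subseteq> TT M"
    proof
      fix x assume "x \<in> key ` F"
      then obtain ts where ts: "ts \<in> F" "x = key ts" by blast
      have "fdeg ts \<le> M" using ts fin unfolding M_def by (meson Max_ge finite_imageI image_eqI le_max_iff_disj)
      then show "x \<in> TT M" using key_in_TT ts A by blast
    qed
    have fiber: "(\<Sum>ts\<in>{ts \<in> F. key ts = \<kappa>}. 1 / PP ts ^ 3) \<le> w \<kappa> * (27/19)"
      if "\<kappa> \<in> TT M" for \<kappa>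
    proof -
      define Fk where "Fk = {ts \<in> F. key ts = \<kappa>}"
      have finFk: "finite Fk" using fin by (simp add: Fk_def)
      have wk: "w \<kappa> \<ge> 0" by (simp add: w_def)
      have eq: "1 / PP ts ^ 3 = w \<kappa> * (1 / PP (rest ts) ^ 3)" if "ts \<in> Fk" for ts
      proof -
        have ne: "ts \<noteq> []" using that A by (auto simp: Fk_def)
        have "fdeg ts = snd (snd (snd \<kappa>))" using that by (auto simp: Fk_def key_def)
        then show ?thesis using PP_cons[OF ne] by (simp add: w_def power_mult_distrib)
      qed
      have inj: "inj_on rest Fk"
        using A key_inj unfolding inj_on_def Fk_def by blast
      have "(\<Sum>ts\<in>Fk. 1 / PP ts ^ 3) = w \<kappa> * (\<Sum>ts\<in>Fk. 1 / PP (rest ts) ^ 3)"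
        using eq by (simp add: sum_distrib_left)
      also have "(\<Sum>ts\<in>Fk. 1 / PP (rest ts) ^ 3) = (\<Sum>u\<in>rest ` Fk. 1 / PP u ^ 3)"
        using sum.reindex[OF inj, of "\<lambda>u. 1 / PP u ^ 3"] by simp
      also have "\<dots> \<le> 27/19"
      proof -
        let ?R = "rest ` Fk"
        have finR: "finite ?R" using finFk by simp
        have s: "(\<Sum>u\<in>?R. 1 / PP u ^ 3) = (\<Sum>u\<in>?R \<inter> {[]}. 1 / PP u ^ 3) + (\<Sum>u\<in>?R - {[]}. 1 / PP u ^ 3)"
          using sum.Int_Diff[OF finR] by blast
        have s1: "(\<Sum>u\<in>?R \<inter> {[]}. 1 / PP u ^ 3) \<le> 1"
        proof -
          have "(\<Sum>u\<in>?R \<inter> {[]}. 1 / PP u ^ 3) \<le> (\<Sum>u\<in>{[]}. 1 / PP u ^ 3)"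
            by (rule sum_mono2) (auto simp: PP_Nil)
          then show ?thesis by (simp add: PP_Nil)
        qed
        have s2: "(\<Sum>u\<in>?R - {[]}. 1 / PP u ^ 3) \<le> 8/19"
        proof -
          have "\<forall>u\<in>?R - {[]}. reduced_word u \<and> u \<noteq> [] \<and> length u \<le> n"
          proof
            fix u assume "u \<in> ?R - {[]}"
            then obtain ts where ts: "ts \<in> Fk" "u = rest ts" "u \<noteq> []" by blast
            have "reduced_word ts" "ts \<noteq> []" "length ts \<le> Suc n" using ts(1) A by (auto simp: Fk_def)
            then show "reduced_word u \<and> u \<noteq> [] \<and> length u \<le> n"
              using ts rest_len[of ts] reduced_drop by (auto simp: rest_def)
          qed
          then show ?thesis using Suc.IH finR by blast
        qed
        show ?thesis using s s1 s2 by simp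
      qed
      finally have "(\<Sum>ts\<in>Fk. 1 / PP ts ^ 3) \<le> w \<kappa> * (27/19)"
        using wk by (simp add: mult_left_mono)
      then show ?thesis by (simp add: Fk_def)
    qed
    have "(\<Sum>ts\<in>F. 1 / PP ts ^ 3) = (\<Sum>\<kappa>\<in>TT M. \<Sum>ts\<in>{ts \<in> F. key ts = \<kappa>}. 1 / PP ts ^ 3)"
      using sum.group[OF fin finite_TT kT, of "\<lambda>ts. 1 / PP ts ^ 3"] by simp
    also have "\<dots> \<le> (\<Sum>\<kappa>\<in>TT M. w \<kappa> * (27/19))"
      by (rule sum_mono) (rule fiber)
    also have "\<dots> = sum w (TT M) * (27/19)" by (rule sum_distrib_right[symmetric])
    also have "\<dots> \<le> 8/27 * (27/19)" using sum_TT[OF M1] by simp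
    finally show "(\<Sum>ts\<in>F. 1 / PP ts ^ 3) \<le> 8/19" by simp
  qed
qed

theorem lemma1:
  fixes Y :: real
  assumes "Y > 0"
  shows "real (N_Lminus_PB3 Y) \<le> exp (3 * Y) / 2"
proof -
  define S where "S = {ts. reduced_word ts \<and> ts \<noteq> [] \<and> L_minus ts \<le> Y}"
  have N: "N_Lminus_PB3 Y = card S" by (simp add: N_Lminus_PB3_def S_def)
  show ?thesis
  proof (cases "finite S")
    case False
    then show ?thesis using N by simp
  next
    case True
    have one: "1 \<le> exp (3 * Y) * (1 / PP ts ^ 3)" if "ts \<in> S" for ts
    proof -
      have "PP ts \<le> exp Y" using that by (simp add: S_def PP_exp)
      then have "PP ts ^ 3 \<le> exp Y ^ 3" using PP_pos[of ts] by (intro power_mono) auto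
      also have "\<dots> = exp (3 * Y)" using exp_of_nat_mult[of 3 Y] by simp
      finally show ?thesis using PP_pos[of ts] by (simp add: field_simps)
    qed
    have "real (card S) = (\<Sum>ts\<in>S. 1)" by simp
    also have "\<dots> \<le> (\<Sum>ts\<in>S. exp (3 * Y) * (1 / PP ts ^ 3))"
      by (rule sum_mono) (rule one)
    also have "\<dots> = exp (3 * Y) * (\<Sum>ts\<in>S. 1 / PP ts ^ 3)" by (simp add: sum_distrib_left)
    also have "\<dots> \<le> exp (3 * Y) * (8/19)"
    proof -
      have "\<forall>ts\<in>S. reduced_word ts \<and> ts \<noteq> [] \<and> length ts \<le> Max (length ` S)"
        using True by (auto simp: S_def intro: Max_ge)
      then have "(\<Sum>ts\<in>S. 1 / PP ts ^ 3) \<le> 8/19" using main True by blast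
      then show ?thesis by (simp add: mult_left_mono)
    qed
    also have "\<dots> \<le> exp (3 * Y) / 2" by simp
    finally show ?thesis using N by simp
  qed
qed

end
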